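(* Let $a,b$ be positive integers and $m\ge 2$, and let $\vec k=(a,b,\dots,b)$ be the vector of length $m$ with first entry $a$ and all other entries equal to $b$. Then $\widetilde{C}_{\vec k}(q,t)=\sum_{\pi\in\mathcal D_{\vec k}}q^{\mathrm{area}(\pi)}t^{\mathrm{depth}(\pi)}$ is $q,t$-symmetric, i.e. $\widetilde{C}_{\vec k}(q,t)=\widetilde{C}_{\vec k}(t,q)$. In particular, $\widetilde{C}_{\vec k}(q,t)$ is $q,t$-symmetric for every vector $\vec k$ of positive integers of length $2$.
   Context: For $\vec k=(k_1,\dots,k_\ell)$ put $|\vec k|=\sum k_i$, $N=|\vec k|+\ell$. A $\vec k$-Dyck path is a word $\pi=\pi_1\cdots\pi_N$ containing the letters $S^{k_1},\dots,S^{k_\ell}$ exactly once each and in this order, together with $|\vec k|$ letters $W$, such that all starting ranks are nonnegative, where $r_1=0$, $r_{i+1}=r_i+k_j$ if $\pi_i=S^{k_j}$ and $r_{i+1}=r_i-1$ if $\pi_i=W$. $\mathcal D_{\vec k}$ is the set of such paths. $\mathrm{area}(\pi)=\sum_j a_j$ where $a_j$ is the starting rank of $S^{k_j}$. Filling algorithm $\eta_*$: in a tableau of $\ell$ top-justified columns, column $i$ having $k_i+1$ cells, place $1$ at the top of column 1; for $i=2,\dots,N$, call an entry active if it is currently the bottom entry of a column $i'$ not yet containing $k_{i'}+1$ entries; if $\pi_i=W$ place $i$ immediately below the largest active entry, otherwise place $i$ at the top of the first empty column. Ranking algorithm $\gamma_*$: column 1 gets ranks $0,\dots,k_1$ top to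 bottom; for $i\ge2$, if the top entry of column $i$ of $\eta_*(\pi)$ is $A+1$ and $A$ has rank $\alpha$, column $i$ gets ranks $\alpha,\dots,\alpha+k_i$ top to bottom. $\mathrm{depth}(\pi)$ is the sum of the first-row ranks. *)

theory Defs
  imports Main
begin

text \<open>Letters of a k-Dyck word: S j stands for the letter S^{k_j} (0-based index j),
  W is the west step.\<close>
datatype letter = S nat | W

text \<open>Starting rank of the letter at 0-based position i (r_{i+1} in the paper).\<close>
definition srank :: "nat list \<Rightarrow> letter list \<Rightarrow> nat \<Rightarrow> int" where
  "srank k \<pi> i = sum_list (map (\<lambda>x. case x of S j \<Rightarrow> int (k ! j) | W \<Rightarrow> -1) (take i \<pi>))"

definition kdyck :: "nat list \<Rightarrow> letter list \<Rightarrow> bool" where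
  "kdyck k \<pi> \<longleftrightarrow>
     length \<pi> = sum_list k + length k
   \<and> filter (\<lambda>x. x \<noteq> W) \<pi> = map S [0..<length k]
   \<and> (\<forall>i < length \<pi>. 0 \<le> srank k \<pi> i)"

definition Dyck :: "nat list \<Rightarrow> letter list set" where
  "Dyck k = {\<pi>. kdyck k \<pi>}"

definition pos_of :: "'b list \<Rightarrow> 'b \<Rightarrow> nat" where
  "pos_of xs a = (LEAST p. p < length xs \<and> xs ! p = a)"

definition area :: "nat list \<Rightarrow> letter list \<Rightarrow> nat" where
  "area k \<pi> = (\<Sum>j<length k. nat (srank k \<pi> (pos_of \<pi> (S j))))"

text \<open>Filling algorithm eta_*: a tableau is a list of columns, each column a list of
  entries from top to bottom.\<close>
definition active_cols :: "nat list \<Rightarrow> nat list list \<Rightarrow> nat set" where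
  "active_cols k cols = {c. c < length k \<and> cols ! c \<noteq> [] \<and> length (cols ! c) < k ! c + 1}"

definition fill_step :: "nat list \<Rightarrow> nat list list \<Rightarrow> nat \<times> letter \<Rightarrow> nat list list" where
  "fill_step k cols ix = (case ix of (i, x) \<Rightarrow>
     (case x of
        W \<Rightarrow> (let c = (ARG_MAX (\<lambda>c. last (cols ! c)) c. c \<in> active_cols k cols)
              in cols[c := cols ! c @ [i]])
      | S _ \<Rightarrow> (let c = (LEAST c. c < length cols \<and> cols ! c = [])
              in cols[c := [i]])))"

definition fill :: "nat list \<Rightarrow> letter list \<Rightarrow> nat list list" where
  "fill k \<pi> = foldl (fill_step k) ([1] # replicate (length k - 1) [])
                    (zip [2..<length \<pi> + 1] (tl \<pi>))"

text \<open>Ranking algorithm gamma_*: we record the rank of the top entry of each column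
  (column c gets ranks base_c, ..., base_c + k_c from top to bottom).\<close>
definition col_of :: "nat list list \<Rightarrow> nat \<Rightarrow> nat" where
  "col_of T A = (THE c. c < length T \<and> A \<in> set (T ! c))"

definition bases :: "nat list list \<Rightarrow> nat list" where
  "bases T = foldl (\<lambda>bs c. bs @ [(let A = hd (T ! c) - 1; c' = col_of T A
                                    in bs ! c' + pos_of (T ! c') A)])
                   [0] [1..<length T]"

definition depth :: "nat list \<Rightarrow> letter list \<Rightarrow> nat" where
  "depth k \<pi> = sum_list (bases (fill k \<pi>))"

definition Ctil :: "nat list \<Rightarrow> 'a::comm_semiring_1 \<Rightarrow> 'a \<Rightarrow> 'a" where
  "Ctil k q t = (\<Sum>\<pi>\<in>Dyck k. q ^ area k \<pi> * t ^ depth k \<pi>)"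

end

theory Submission
  imports Defs
begin


definition blk :: "nat \<Rightarrow> nat \<times> nat \<Rightarrow> (nat \<times> nat) list" where
  "blk kk x = map (\<lambda>p. (fst x + (kk - p), snd x + p)) [0..<Suc kk]"

lemma blk_ne[simp]: "blk kk x \<noteq> []" by (simp add: blk_def)
lemma length_blk[simp]: "length (blk kk x) = Suc kk" by (simp add: blk_def)

function FF :: "nat \<Rightarrow> 'a::comm_semiring_1 \<Rightarrow> 'a \<Rightarrow> (nat \<times> nat) list \<Rightarrow> nat \<Rightarrow> 'a" where
  "FF b q t [] n = 0"
| "FF b q t [x] n = (if n = 0 then 1 else q ^ fst x * t ^ snd x * FF b q t (blk b x) (n - 1))"
| "FF b q t (x # y # L) n = FF b q t (y # L) n +
      (if n = 0 then 0 else q ^ fst x * t ^ snd x * FF b q t (blk b x @ y # L) (n - 1))"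
  by pat_completeness auto
termination
  apply (relation "measure (\<lambda>(b,q,t,L,n). Suc b * n + length L)")
  apply auto
  apply (case_tac n, simp_all)+
  done

definition conv :: "(nat \<Rightarrow> 'a::comm_semiring_1) \<Rightarrow> (nat \<Rightarrow> 'a) \<Rightarrow> nat \<Rightarrow> 'a" where
  "conv f g n = (\<Sum>j\<le>n. f j * g (n - j))"

lemma conv_shift:
  "conv (\<lambda>j. if j = 0 then 0 else h (j - 1)) g n = (if n = 0 then 0 else conv h g (n - 1))"
proof (cases n)
  case 0 then show ?thesis by (simp add: conv_def)
next
  case (Suc n')
  have "conv (\<lambda>j. if j = 0 then 0 else h (j - 1)) g n
      = (\<Sum>j\<le>Suc n'. (if j = 0 then 0 else h (j - 1)) * g (Suc n' - j))"
    by (simp add: conv_def Suc)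
  also have "\<dots> = (\<Sum>j\<le>n'. h j * g (n' - j))"
    by (subst sum.atMost_Suc_shift) simp
  finally show ?thesis by (simp add: conv_def Suc)
qed

lemma conv_comm: "conv f g n = conv g f n"
  unfolding conv_def
  by (rule sum.reindex_bij_witness[where i="\<lambda>j. n - j" and j="\<lambda>j. n - j"]) (auto simp: mult.commute)

lemma conv_add: "conv (\<lambda>j. f j + h j) g n = conv f g n + conv h g n"
  by (simp add: conv_def distrib_right sum.distrib)

lemma conv_cmult: "conv (\<lambda>j. c * f j) g n = c * conv f g n"
  by (simp add: conv_def sum_distrib_left mult.assoc)

lemma FF_single_conv:
  "C \<noteq> [] \<Longrightarrow> FF b q t (x # C) n = FF b q t C n +
     (if n = 0 then 0 else q ^ fst x * t ^ snd x * FF b q t (blk b x @ C) (n - 1))"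
  by (cases C) auto

lemma FF_append:
  "A \<noteq> [] \<Longrightarrow> C \<noteq> [] \<Longrightarrow> FF b q t (A @ C) n = conv (FF b q t A) (FF b q t C) n"
proof (induction b q t A n arbitrary: C rule: FF.induct)
  case (1 b q t n)
  then show ?case by simp
next
  case (2 b q t x n)
  let ?w = "q ^ fst x * t ^ snd x"
  have e: "FF b q t [x] = (\<lambda>j. (if j = 0 then 1 else 0) + (if j = 0 then 0 else ?w * FF b q t (blk b x) (j - 1)))"
    by (rule ext) simp
  have c1: "conv (\<lambda>j. if j = 0 then 1 else 0) (FF b q t C) n = FF b q t C n"
    unfolding conv_def by (subst sum.remove[of _ 0]) auto
  have c2: "conv (\<lambda>j. if j = 0 then 0 else ?w * FF b q t (blk b x) (j - 1)) (FF b q t C) n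
      = (if n = 0 then 0 else ?w * conv (FF b q t (blk b x)) (FF b q t C) (n - 1))"
    using conv_shift[of "\<lambda>j. ?w * FF b q t (blk b x) j" "FF b q t C" n]
    by (simp add: conv_cmult)
  show ?case using 2 
    by (simp only: e conv_add c1 c2 append.simps FF_single_conv[OF 2(3)]) simp
next
  case (3 b q t x y L n)
  let ?w = "q ^ fst x * t ^ snd x"
  have e: "FF b q t (x # y # L) = (\<lambda>j. FF b q t (y # L) j + (if j = 0 then 0 else ?w * FF b q t (blk b x @ y # L) (j - 1)))"
    by (rule ext) simp
  have c2: "conv (\<lambda>j. if j = 0 then 0 else ?w * FF b q t (blk b x @ y # L) (j - 1)) (FF b q t C) n
      = (if n = 0 then 0 else ?w * conv (FF b q t (blk b x @ y # L)) (FF b q t C) (n - 1))"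
    using conv_shift[of "\<lambda>j. ?w * FF b q t (blk b x @ y # L) j" "FF b q t C" n]
    by (simp add: conv_cmult)
  have "FF b q t ((x # y # L) @ C) n = FF b q t (y # L @ C) n +
      (if n = 0 then 0 else ?w * FF b q t (blk b x @ y # L @ C) (n - 1))" by simp
  also have "\<dots> = conv (FF b q t (y # L)) (FF b q t C) n +
      (if n = 0 then 0 else ?w * conv (FF b q t (blk b x @ y # L)) (FF b q t C) (n - 1))"
    using 3 by simp
  finally show ?case by (simp only: e conv_add c2)
qed

lemma FF_rev: "A \<noteq> [] \<Longrightarrow> FF b q t (rev A) n = FF b q t A n"
proof (induction A arbitrary: n)
  case Nil then show ?case by simp
next
  case (Cons x A)
  show ?case
  proof (cases "A = []")
    case True then show ?thesis by simp
  next
    case False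
    have "FF b q t (rev (x # A)) n = FF b q t (rev A @ [x]) n" by simp
    also have "\<dots> = conv (FF b q t (rev A)) (FF b q t [x]) n" using False by (simp add: FF_append)
    also have "FF b q t (rev A) = FF b q t A" using Cons False by (intro ext) simp
    also have "conv (FF b q t A) (FF b q t [x]) n = conv (FF b q t [x]) (FF b q t A) n" by (rule conv_comm)
    also have "\<dots> = FF b q t ([x] @ A) n" by (rule sym, rule FF_append) (use False in simp_all)
    finally show ?thesis by simp
  qed
qed

lemma FF_rev_app: assumes "A \<noteq> []" "C \<noteq> []" shows " FF b q t (rev A @ C) n = FF b q t (A @ C) n"
proof -
  have "FF b q t (rev A) = FF b q t A" using FF_rev[of A] assms by (intro ext) simp
  then show ?thesis using assms by (simp add: FF_append)
qed

lemma nth_upt0: "k < n \<Longrightarrow> [0..<n] ! k = k" by simp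

lemma map_swap_blk: "map prod.swap (blk b x) = rev (blk b (prod.swap x))"
  unfolding blk_def
  apply (rule nth_equalityI)
   apply simp
  apply (simp del: upt_Suc add: rev_nth)
  apply (subst nth_upt0, simp)+
  apply simp
  done

lemma FF_swap: "FF b q t L n = FF b t q (map prod.swap L) n"
proof (induction b q t L n rule: FF.induct)
  case (1 b q t n) then show ?case by simp
next
  case (2 b q t x n)
  then show ?case
    by (simp add: map_swap_blk FF_rev mult.commute)
next
  case (3 b q t x y L n)
  have "FF b t q (map prod.swap (blk b x) @ map prod.swap (y # L)) (n - 1)
     = FF b t q (blk b (prod.swap x) @ map prod.swap (y # L)) (n - 1)"
    by (simp only: map_swap_blk) (rule FF_rev_app, simp_all)
  then show ?case using 3
    by (simp add: mult.commute)
qed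

lemma FF_blk_sym: "FF b q t (blk a (0,0)) n = FF b t q (blk a (0,0)) n"
proof -
  have "FF b q t (blk a (0,0)) n = FF b t q (rev (blk a (0,0))) n"
    using FF_swap[of b q t "blk a (0,0)" n] by (simp add: map_swap_blk)
  also have "\<dots> = FF b t q (blk a (0,0)) n" by (rule FF_rev) simp
  finally show ?thesis .
qed



type_synonym sst = "(nat \<times> nat) list \<times> nat \<times> nat \<times> nat"

fun sstep :: "nat list \<Rightarrow> sst \<Rightarrow> letter \<Rightarrow> sst" where
  "sstep k (L, j, A, D) (S i) = (blk (k ! j) (hd L) @ tl L, Suc j, A + fst (hd L), D + snd (hd L))"
| "sstep k (L, j, A, D) W = (tl L, j, A, D)"

fun okst :: "nat list \<Rightarrow> sst \<Rightarrow> letter \<Rightarrow> bool" where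
  "okst k (L, j, A, D) (S i) = (i = j \<and> j < length k)"
| "okst k (L, j, A, D) W = (2 \<le> length L)"

fun finst :: "nat list \<Rightarrow> sst \<Rightarrow> bool" where
  "finst k (L, j, A, D) = (length L = 1 \<and> j = length k)"

fun run :: "nat list \<Rightarrow> sst \<Rightarrow> letter list \<Rightarrow> bool" where
  "run k st [] = finst k st"
| "run k st (x # xs) = (okst k st x \<and> run k (sstep k st x) xs)"

definition st0 :: sst where "st0 = ([(0,0)], 0, 0, 0)"

lemma run_iff:
  "run k st xs \<longleftrightarrow> (\<forall>n<length xs. okst k (foldl (sstep k) st (take n xs)) (xs ! n))
                    \<and> finst k (foldl (sstep k) st xs)"
proof (induction xs arbitrary: st)
  case Nil then show ?case by simp
next
  case (Cons x xs)
  show ?case by (simp add: Cons All_less_Suc2 del: finst.simps)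
qed

lemma srank_Suc:
  "n < length \<pi> \<Longrightarrow> srank k \<pi> (Suc n) = srank k \<pi> n + (case \<pi> ! n of S j \<Rightarrow> int (k ! j) | W \<Rightarrow> -1)"
  by (simp add: srank_def take_Suc_conv_app_nth)

lemma srank_0[simp]: "srank k \<pi> 0 = 0" by (simp add: srank_def)

lemma pos_of_eq:
  assumes "n < length xs" "xs ! n = a" "a \<notin> set (take n xs)"
  shows "pos_of xs a = n"
  unfolding pos_of_def
proof (rule Least_equality)
  show "n < length xs \<and> xs ! n = a" using assms by simp
next
  fix p assume p: "p < length xs \<and> xs ! p = a"
  show "n \<le> p"
  proof (rule ccontr)
    assume "\<not> n \<le> p"
    then have "take n xs ! p = a" "p < length (take n xs)" using p by auto
    then have "a \<in> set (take n xs)" by (metis nth_mem)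
    then show False using assms by simp
  qed
qed

definition stn :: "nat list \<Rightarrow> letter list \<Rightarrow> nat \<Rightarrow> sst" where
  "stn k \<pi> n = foldl (sstep k) st0 (take n \<pi>)"

lemma stn_Suc: "n < length \<pi> \<Longrightarrow> stn k \<pi> (Suc n) = sstep k (stn k \<pi> n) (\<pi> ! n)"
  by (simp add: stn_def take_Suc_conv_app_nth)

definition binv :: "nat list \<Rightarrow> letter list \<Rightarrow> nat \<Rightarrow> sst \<Rightarrow> bool" where
  "binv k \<pi> n st = (case st of (L, j, A, D) \<Rightarrow>
     L \<noteq> [] \<and> (\<forall>i<length L. fst (L ! i) + i + 1 = length L)
     \<and> int (length L) = srank k \<pi> n + 1
     \<and> filter (\<lambda>x. x \<noteq> W) (take n \<pi>) = map S [0..<j]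
     \<and> A = (\<Sum>i<j. nat (srank k \<pi> (pos_of \<pi> (S i)))))"

lemma binv_step:
  assumes n: "n < length \<pi>" and inv: "binv k \<pi> n st" and ok: "okst k st (\<pi> ! n)"
  shows "binv k \<pi> (Suc n) (sstep k st (\<pi> ! n))"
proof -
  obtain L j A D where st: "st = (L, j, A, D)" by (cases st) auto
  have Lne: "L \<noteq> []" and fstL: "\<forall>i<length L. fst (L ! i) + i + 1 = length L"
    and sr: "int (length L) = srank k \<pi> n + 1"
    and fil: "filter (\<lambda>x. x \<noteq> W) (take n \<pi>) = map S [0..<j]"
    and Aeq: "A = (\<Sum>i<j. nat (srank k \<pi> (pos_of \<pi> (S i))))"
    using inv by (auto simp: binv_def st)
  have tk: "take (Suc n) \<pi> = take n \<pi> @ [\<pi> ! n]" using n by (simp add: take_Suc_conv_app_nth)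
  have hd0: "fst (hd L) + 1 = length L" using fstL[rule_format, of 0] Lne by (simp add: hd_conv_nth)
  show ?thesis
  proof (cases "\<pi> ! n")
    case (S i)
    then have ij: "i = j" and jl: "j < length k" using ok st by auto
    let ?kk = "k ! j"
    let ?L' = "blk ?kk (hd L) @ tl L"
    have len': "length ?L' = length L + ?kk" using Lne by simp
    have f1: "\<forall>i<length ?L'. fst (?L' ! i) + i + 1 = length ?L'"
    proof (intro allI impI)
      fix p assume p: "p < length ?L'"
      show "fst (?L' ! p) + p + 1 = length ?L'"
      proof (cases "p < Suc ?kk")
        case True
        then have "?L' ! p = blk ?kk (hd L) ! p" by (simp add: nth_append)
        also have "\<dots> = (fst (hd L) + (?kk - p), snd (hd L) + p)" using True
          by (simp add: blk_def del: upt_Suc)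
        finally show ?thesis using True hd0 len' by simp
      next
        case False
        then have "?L' ! p = tl L ! (p - Suc ?kk)" by (simp add: nth_append)
        also have "\<dots> = L ! (p - ?kk)" using False p len' Lne
          by (simp add: nth_tl Suc_diff_Suc)
        moreover have "p - ?kk < length L" using False p len' by simp
        ultimately show ?thesis using fstL[rule_format, of "p - ?kk"] False p len' by simp
      qed
    qed
    have sr': "int (length ?L') = srank k \<pi> (Suc n) + 1"
      using len' sr srank_Suc[OF n, of k] S ij by simp
    have fil': "filter (\<lambda>x. x \<noteq> W) (take (Suc n) \<pi>) = map S [0..<Suc j]"
      using tk fil S ij by simp
    have notin: "S j \<notin> set (take n \<pi>)"
    proof
      assume "S j \<in> set (take n \<pi>)"
      then have "S j \<in> set (filter (\<lambda>x. x \<noteq> W) (take n \<pi>))" by simp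
      then show False using fil by auto
    qed
    have po: "pos_of \<pi> (S j) = n" using pos_of_eq[OF n] S ij notin by simp
    have A': "A + fst (hd L) = (\<Sum>i<Suc j. nat (srank k \<pi> (pos_of \<pi> (S i))))"
      using Aeq po hd0 sr by simp
    show ?thesis using S st f1 sr' fil' A' Lne
      by (simp add: binv_def del: upt_Suc)
  next
    case W
    then have l2: "2 \<le> length L" using ok st by simp
    have f1: "\<forall>i<length (tl L). fst (tl L ! i) + i + 1 = length (tl L)"
    proof (intro allI impI)
      fix i assume "i < length (tl L)"
      then have "Suc i < length L" by simp
      then show "fst (tl L ! i) + i + 1 = length (tl L)" using fstL[rule_format, of "Suc i"] by (simp add: nth_tl)
    qed
    have sr': "int (length (tl L)) = srank k \<pi> (Suc n) + 1"
      using sr srank_Suc[OF n, of k] W l2 by simp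
    have fil': "filter (\<lambda>x. x \<noteq> W) (take (Suc n) \<pi>) = map S [0..<j]"
      using tk fil W by simp
    have "tl L \<noteq> []" using l2 by (cases L) auto
    then show ?thesis using W st f1 sr' fil' Aeq
      by (simp add: binv_def)
  qed
qed

lemma binv_0: "binv k \<pi> 0 st0"
  by (simp add: binv_def st0_def)

lemma binv_upto:
  assumes "n \<le> length \<pi>" "\<forall>m<n. okst k (stn k \<pi> m) (\<pi> ! m)"
  shows "binv k \<pi> n (stn k \<pi> n)"
  using assms
proof (induction n)
  case 0 then show ?case by (simp add: stn_def binv_0)
next
  case (Suc n)
  then show ?case by (simp add: stn_Suc binv_step)
qed

lemma sum_list_filter_split:
  "sum_list (map f xs) = sum_list (map f (filter P xs)) + sum_list (map f (filter (\<lambda>x. \<not> P x) xs))"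
  for f :: "'b \<Rightarrow> 'c::comm_monoid_add"
  by (induction xs) (auto simp: ac_simps)

lemma sum_list_int: "sum_list (map (\<lambda>x. int (g x)) xs) = int (sum_list (map g xs))"
  by (induction xs) auto

lemma srank_total:
  assumes fil: "filter (\<lambda>x. x \<noteq> W) \<pi> = map S [0..<length k]"
  shows "srank k \<pi> (length \<pi>) = int (sum_list k) - int (length \<pi> - length k)"
proof -
  let ?f = "\<lambda>x. case x of S j \<Rightarrow> int (k ! j) | W \<Rightarrow> -1"
  have "srank k \<pi> (length \<pi>) = sum_list (map ?f \<pi>)" by (simp add: srank_def)
  also have "\<dots> = sum_list (map ?f (filter (\<lambda>x. x \<noteq> W) \<pi>)) + sum_list (map ?f (filter (\<lambda>x. \<not> x \<noteq> W) \<pi>))"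
    by (rule sum_list_filter_split)
  also have "sum_list (map ?f (filter (\<lambda>x. x \<noteq> W) \<pi>)) = int (sum_list k)"
  proof -
    have "sum_list (map ?f (filter (\<lambda>x. x \<noteq> W) \<pi>)) = sum_list (map (\<lambda>j. int (k ! j)) [0..<length k])"
      by (simp add: fil comp_def)
    also have "\<dots> = int (sum_list (map (\<lambda>j. k ! j) [0..<length k]))" by (rule sum_list_int)
    also have "map (\<lambda>j. k ! j) [0..<length k] = k" by (rule map_nth)
    finally show ?thesis .
  qed
  also have "map ?f (filter (\<lambda>x. \<not> x \<noteq> W) \<pi>) = map (\<lambda>_. -1) (filter (\<lambda>x. \<not> x \<noteq> W) \<pi>)"
    by (rule map_cong) auto
  also have "sum_list (map (\<lambda>_. -1::int) (filter (\<lambda>x. \<not> x \<noteq> W) \<pi>)) = - int (length (filter (\<lambda>x. \<not> x \<noteq> W) \<pi>))"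
    by (induction \<pi>) auto
  also have "length (filter (\<lambda>x. \<not> x \<noteq> W) \<pi>) = length \<pi> - length k"
    using sum_length_filter_compl[of "\<lambda>x. x \<noteq> W" \<pi>] fil by simp
  finally show ?thesis by simp
qed

lemma kdyck_ok:
  assumes kd: "kdyck k \<pi>"
  shows "\<forall>m<n. n \<le> length \<pi> \<longrightarrow> okst k (stn k \<pi> m) (\<pi> ! m)"
proof (induction n)
  case 0 then show ?case by simp
next
  case (Suc n)
  show ?case
  proof (intro allI impI)
    fix m assume m: "m < Suc n" and nl: "Suc n \<le> length \<pi>"
    show "okst k (stn k \<pi> m) (\<pi> ! m)"
    proof (cases "m < n")
      case True then show ?thesis using Suc nl by simp
    next
      case False
      then have mn: "m = n" using m by simp
      have allok: "\<forall>m<n. okst k (stn k \<pi> m) (\<pi> ! m)" using Suc nl by simp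
      have bi: "binv k \<pi> n (stn k \<pi> n)" using binv_upto[OF _ allok] nl by simp
      obtain L j A D where st: "stn k \<pi> n = (L, j, A, D)" by (cases "stn k \<pi> n") auto
      have sr: "int (length L) = srank k \<pi> n + 1"
        and fil: "filter (\<lambda>x. x \<noteq> W) (take n \<pi>) = map S [0..<j]"
        using bi by (auto simp: binv_def st)
      have n: "n < length \<pi>" using nl by simp
      have filpi: "filter (\<lambda>x. x \<noteq> W) \<pi> = map S [0..<length k]" using kd by (simp add: kdyck_def)
      show ?thesis
      proof (cases "\<pi> ! n")
        case (S i)
        have "filter (\<lambda>x. x \<noteq> W) \<pi> = filter (\<lambda>x. x \<noteq> W) (take (Suc n) \<pi>) @ filter (\<lambda>x. x \<noteq> W) (drop (Suc n) \<pi>)"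
          by (metis append_take_drop_id filter_append)
        moreover have "filter (\<lambda>x. x \<noteq> W) (take (Suc n) \<pi>) = map S [0..<j] @ [S i]"
          using fil S n by (simp add: take_Suc_conv_app_nth)
        ultimately have "map S [0..<length k] = map S [0..<j] @ [S i] @ filter (\<lambda>x. x \<noteq> W) (drop (Suc n) \<pi>)"
          using filpi by simp
        then have e: "map S [0..<length k] = map S [0..<j] @ S i # filter (\<lambda>x. x \<noteq> W) (drop (Suc n) \<pi>)" by simp
        then have "length (map S [0..<length k]) = j + Suc (length (filter (\<lambda>x. x \<noteq> W) (drop (Suc n) \<pi>)))"
          using arg_cong[OF e, of length] by simp
        then have jl: "j < length k" by simp
        have "map S [0..<length k] ! j = S i" using e by (simp add: nth_append)
        then have "i = j" using jl by simp
        then show ?thesis using jl S st mn by simp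
      next
        case W
        have sr1: "srank k \<pi> (Suc n) = srank k \<pi> n - 1" using srank_Suc[OF n, of k] W by simp
        have "srank k \<pi> (Suc n) \<ge> 0"
        proof (cases "Suc n < length \<pi>")
          case True then show ?thesis using kd by (simp add: kdyck_def)
        next
          case False
          then have "Suc n = length \<pi>" using nl by simp
          then show ?thesis using srank_total[OF filpi] kd by (simp add: kdyck_def)
        qed
        then have "2 \<le> length L" using sr sr1 by simp
        then show ?thesis using W st mn by simp
      qed
    qed
  qed
qed

lemma kdyck_run: assumes "kdyck k \<pi>" shows "run k st0 \<pi>"
proof -
  have ok: "\<forall>m<length \<pi>. okst k (stn k \<pi> m) (\<pi> ! m)" using kdyck_ok[OF assms, of "length \<pi>"] by simp
  have bi: "binv k \<pi> (length \<pi>) (stn k \<pi> (length \<pi>))" using binv_upto[OF _ ok] by simp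
  obtain L j A D where st: "stn k \<pi> (length \<pi>) = (L, j, A, D)" by (cases "stn k \<pi> (length \<pi>)") auto
  have sr: "int (length L) = srank k \<pi> (length \<pi>) + 1"
    and fil: "filter (\<lambda>x. x \<noteq> W) \<pi> = map S [0..<j]"
    using bi by (auto simp: binv_def st)
  have filpi: "filter (\<lambda>x. x \<noteq> W) \<pi> = map S [0..<length k]" using assms by (simp add: kdyck_def)
  have "length (map S [0..<j]) = length (map S [0..<length k])" using fil filpi by simp
  then have "j = length k" by simp
  moreover have "length L = 1" using sr srank_total[OF filpi] assms by (simp add: kdyck_def)
  ultimately have "finst k (foldl (sstep k) st0 \<pi>)" using st by (simp add: stn_def)
  then show ?thesis using ok by (simp add: run_iff stn_def)
qed

lemma run_kdyck_area:
  assumes "run k st0 \<pi>" "foldl (sstep k) st0 \<pi> = (L, j, A, D)"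
  shows "kdyck k \<pi> \<and> area k \<pi> = A"
proof -
  have ok: "\<forall>m<length \<pi>. okst k (stn k \<pi> m) (\<pi> ! m)" and fin: "finst k (foldl (sstep k) st0 \<pi>)"
    using assms(1) by (simp_all add: run_iff stn_def)
  have allb: "\<forall>n\<le>length \<pi>. binv k \<pi> n (stn k \<pi> n)" using binv_upto ok by simp
  have bi: "binv k \<pi> (length \<pi>) (L, j, A, D)" using allb[rule_format, of "length \<pi>"] assms(2) by (simp add: stn_def)
  have sr: "int (length L) = srank k \<pi> (length \<pi>) + 1"
    and fil: "filter (\<lambda>x. x \<noteq> W) \<pi> = map S [0..<j]"
    and Aeq: "A = (\<Sum>i<j. nat (srank k \<pi> (pos_of \<pi> (S i))))"
    using bi by (auto simp: binv_def)
  have jl: "j = length k" and L1: "length L = 1" using fin assms(2) by auto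
  have filpi: "filter (\<lambda>x. x \<noteq> W) \<pi> = map S [0..<length k]" using fil jl by simp
  have "srank k \<pi> (length \<pi>) = 0" using sr L1 by simp
  then have "int (sum_list k) = int (length \<pi> - length k)" using srank_total[OF filpi] by simp
  moreover have "length k \<le> length \<pi>"
    using filpi length_filter_le[of "\<lambda>x. x \<noteq> W" \<pi>] by simp
  ultimately have len: "length \<pi> = sum_list k + length k" by simp
  have nonneg: "\<forall>i<length \<pi>. 0 \<le> srank k \<pi> i"
  proof (intro allI impI)
    fix i assume i: "i < length \<pi>"
    have "binv k \<pi> i (stn k \<pi> i)" using allb i by simp
    then show "0 \<le> srank k \<pi> i" by (cases "stn k \<pi> i") (auto simp: binv_def)
  qed
  have "kdyck k \<pi>" using len filpi nonneg by (simp add: kdyck_def)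
  moreover have "area k \<pi> = A" using Aeq jl by (simp add: area_def)
  ultimately show ?thesis by simp
qed



definition blocks :: "nat list \<Rightarrow> nat list list \<Rightarrow> nat list \<Rightarrow> (nat \<times> nat) list" where
  "blocks k cols stk = concat (map (\<lambda>c. map (Pair c) [length (cols ! c)..<Suc (k ! c)]) stk)"

lemma blocks_cong: "(\<And>d. d \<in> set s \<Longrightarrow> cols' ! d = cols ! d) \<Longrightarrow> blocks k cols' s = blocks k cols s"
  unfolding blocks_def by (induction s) auto

lemma blocks_Cons: "blocks k cols (c # s) = map (Pair c) [length (cols ! c)..<Suc (k ! c)] @ blocks k cols s"
  by (simp add: blocks_def)

lemma blocks_fst: "x \<in> set (blocks k cols s) \<Longrightarrow> fst x \<in> set s"
  unfolding blocks_def by auto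

definition finv0 where
  "finv0 k n cols L j D stk (\<beta>::nat \<Rightarrow> nat) par pp c0 p0 \<longleftrightarrow>
     length cols = length k
   \<and> j \<le> length k
   \<and> (\<forall>c<length k. cols ! c \<noteq> [] \<longleftrightarrow> c < j)
   \<and> (\<forall>c<length k. sorted_wrt (<) (cols ! c))
   \<and> (\<forall>c<length k. \<forall>x\<in>set (cols ! c). x \<le> n)
   \<and> (\<forall>c<length k. \<forall>d<length k. c \<noteq> d \<longrightarrow> set (cols ! c) \<inter> set (cols ! d) = {})
   \<and> active_cols k cols = set stk \<and> distinct stk
   \<and> sorted_wrt (\<lambda>c d. last (cols ! d) < last (cols ! c)) stk
   \<and> c0 < j \<and> p0 < length (cols ! c0) \<and> cols ! c0 ! p0 = n
   \<and> map snd L = map (\<lambda>(c,p). \<beta> c + p) ((c0,p0) # blocks k cols stk)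
   \<and> \<beta> 0 = 0
   \<and> (\<forall>c. 1 \<le> c \<and> c < j \<longrightarrow> par c < c \<and> pp c < length (cols ! (par c))
          \<and> cols ! (par c) ! (pp c) = hd (cols ! c) - 1 \<and> \<beta> c = \<beta> (par c) + pp c)
   \<and> D = (\<Sum>c<j. \<beta> c)"

definition finv where
  "finv k n cols st \<longleftrightarrow> (case st of (L, j, A, D) \<Rightarrow> \<exists>stk \<beta> par pp c0 p0. finv0 k n cols L j D stk \<beta> par pp c0 p0)"

lemma arg_max_unique:
  fixes f :: "'b \<Rightarrow> 'c::linorder"
  assumes "P c" "\<And>d. P d \<Longrightarrow> d \<noteq> c \<Longrightarrow> f d < f c"
  shows "arg_max f P = c"
  unfolding arg_max_def
proof (rule some_equality)
  show "is_arg_max f P c" using assms unfolding is_arg_max_def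
    by (metis less_asym)
next
  fix x assume "is_arg_max f P x"
  then show "x = c" using assms unfolding is_arg_max_def by blast
qed

lemma finv_W:
  assumes inv: "finv0 k n cols L j D stk \<beta> par pp c0 p0"
    and l2: "2 \<le> length L"
  shows "finv k (Suc n) (fill_step k cols (Suc n, W)) (tl L, j, A, D)"
proof -
  note I = inv[unfolded finv0_def]
  have lc: "length cols = length k" using I by simp
  have ne: "\<forall>c<length k. cols ! c \<noteq> [] \<longleftrightarrow> c < j" using I by simp
  have srt: "\<forall>c<length k. sorted_wrt (<) (cols ! c)" using I by simp
  have le: "\<forall>c<length k. \<forall>x\<in>set (cols ! c). x \<le> n" using I by simp
  have dj: "\<forall>c<length k. \<forall>d<length k. c \<noteq> d \<longrightarrow> set (cols ! c) \<inter> set (cols ! d) = {}" using I by simp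
  have act: "active_cols k cols = set stk" and ds: "distinct stk" using I by simp_all
  have sst: "sorted_wrt (\<lambda>c d. last (cols ! d) < last (cols ! c)) stk" using I by simp
  have ms: "map snd L = map (\<lambda>(c,p). \<beta> c + p) ((c0,p0) # blocks k cols stk)" using I by simp
  have pars: "\<forall>c. 1 \<le> c \<and> c < j \<longrightarrow> par c < c \<and> pp c < length (cols ! (par c))
          \<and> cols ! (par c) ! (pp c) = hd (cols ! c) - 1 \<and> \<beta> c = \<beta> (par c) + pp c" using I by simp
  have "stk \<noteq> []"
  proof
    assume "stk = []"
    then have "length (map snd L) = 1" using ms by (simp add: blocks_def)
    then show False using l2 by simp
  qed
  then obtain c rest where stk: "stk = c # rest" by (cases stk) auto
  have cact: "c \<in> active_cols k cols" using act stk by simp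
  then have cl: "c < length k" and cne: "cols ! c \<noteq> []" and clen: "length (cols ! c) < Suc (k ! c)"
    by (auto simp: active_cols_def)
  have cj: "c < j" using ne cl cne by simp
  have crest: "c \<notin> set rest" using ds stk by simp
  let ?len = "length (cols ! c)"
  have am: "(ARG_MAX (\<lambda>c. last (cols ! c)) c. c \<in> active_cols k cols) = c"
  proof (rule arg_max_unique)
    show "c \<in> active_cols k cols" by (rule cact)
  next
    fix d assume "d \<in> active_cols k cols" "d \<noteq> c"
    then have "d \<in> set rest" using act stk by simp
    then show "last (cols ! d) < last (cols ! c)" using sst stk by simp
  qed
  define cols' where "cols' = cols[c := cols ! c @ [Suc n]]"
  have fs: "fill_step k cols (Suc n, W) = cols'" by (simp add: fill_step_def am cols'_def)
  have c'c: "cols' ! c = cols ! c @ [Suc n]" using cl lc by (simp add: cols'_def)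
  have c'd: "\<And>d. d \<noteq> c \<Longrightarrow> cols' ! d = cols ! d" by (simp add: cols'_def)
  have lc': "length cols' = length k" using lc by (simp add: cols'_def)
  define stk' where "stk' = (if Suc ?len < Suc (k ! c) then stk else rest)"
  have nin: "Suc n \<notin> set (cols ! d)" if "d < length k" for d using le that by fastforce
  have rest_act: "d \<in> active_cols k cols" if "d \<in> set rest" for d using act stk that by simp
  have rest_c': "cols' ! d = cols ! d" if "d \<in> set rest" for d
  proof -
    have "d \<noteq> c" using that crest by auto
    then show ?thesis by (rule c'd)
  qed
  have ne': "\<forall>d<length k. cols' ! d \<noteq> [] \<longleftrightarrow> d < j"
    using ne c'c c'd cj by (metis snoc_eq_iff_butlast)
  have srt': "\<forall>d<length k. sorted_wrt (<) (cols' ! d)"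
  proof (intro allI impI)
    fix d assume d: "d < length k"
    show "sorted_wrt (<) (cols' ! d)"
    proof (cases "d = c")
      case True
      have "\<forall>x\<in>set (cols ! c). x < Suc n" using le cl by (simp add: less_Suc_eq_le)
      then show ?thesis using srt cl True c'c by (simp add: sorted_wrt_append)
    next
      case False then show ?thesis using srt d c'd by simp
    qed
  qed
  have le': "\<forall>d<length k. \<forall>x\<in>set (cols' ! d). x \<le> Suc n"
  proof (intro allI impI ballI)
    fix d x assume d: "d < length k" and x: "x \<in> set (cols' ! d)"
    show "x \<le> Suc n"
    proof (cases "d = c")
      case True then show ?thesis using x le cl c'c by fastforce
    next
      case False then show ?thesis using x le d c'd by fastforce
    qed
  qed
  have dj': "\<forall>d<length k. \<forall>e<length k. d \<noteq> e \<longrightarrow> set (cols' ! d) \<inter> set (cols' ! e) = {}"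
  proof (intro allI impI)
    fix d e assume d: "d < length k" and e: "e < length k" and de: "d \<noteq> e"
    show "set (cols' ! d) \<inter> set (cols' ! e) = {}"
    proof (cases "d = c")
      case True
      then show ?thesis using dj d e de nin[OF e] c'c c'd by auto
    next
      case False
      show ?thesis
      proof (cases "e = c")
        case True
        then show ?thesis using dj d e de nin[OF d] c'c c'd by auto
      next
        case False
        then show ?thesis using dj d e de c'd \<open>d \<noteq> c\<close> by auto
      qed
    qed
  qed
  have act': "active_cols k cols' = set stk'"
  proof (rule set_eqI)
    fix d
    show "d \<in> active_cols k cols' \<longleftrightarrow> d \<in> set stk'"
    proof (cases "d = c")
      case True
      then show ?thesis using crest cl c'c by (auto simp: active_cols_def stk'_def stk)
    next
      case False
      have "d \<in> active_cols k cols' \<longleftrightarrow> d \<in> active_cols k cols"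
        using False c'd by (simp add: active_cols_def)
      then show ?thesis using False act by (auto simp: stk'_def stk)
    qed
  qed
  have ds': "distinct stk'" using ds by (simp add: stk'_def stk)
  have sst_rest: "sorted_wrt (\<lambda>a b. last (cols' ! b) < last (cols' ! a)) rest"
  proof (rule sorted_wrt_mono_rel[of _ "\<lambda>a b. last (cols ! b) < last (cols ! a)"])
    show "sorted_wrt (\<lambda>a b. last (cols ! b) < last (cols ! a)) rest" using sst stk by simp
  qed (simp add: rest_c')
  have sst': "sorted_wrt (\<lambda>a b. last (cols' ! b) < last (cols' ! a)) stk'"
  proof (cases "Suc ?len < Suc (k ! c)")
    case True
    have "\<forall>d\<in>set rest. last (cols' ! d) < last (cols' ! c)"
    proof
      fix d assume d: "d \<in> set rest"
      then have "d \<in> active_cols k cols" by (rule rest_act)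
      then have dl: "d < length k" and dne: "cols ! d \<noteq> []" by (auto simp: active_cols_def)
      have "last (cols ! d) \<le> n" using le dl dne by simp
      then show "last (cols' ! d) < last (cols' ! c)" using rest_c'[OF d] c'c by simp
    qed
    then show ?thesis using True sst_rest by (simp add: stk'_def stk)
  next
    case False then show ?thesis using sst_rest by (simp add: stk'_def)
  qed
  have pos': "c < j \<and> ?len < length (cols' ! c) \<and> cols' ! c ! ?len = Suc n"
    using cj c'c by simp
  have bl: "blocks k cols stk = (c, ?len) # map (Pair c) [Suc ?len..<Suc (k ! c)] @ blocks k cols rest"
    using clen by (simp add: blocks_Cons stk upt_conv_Cons)
  have bl': "blocks k cols' stk' = map (Pair c) [Suc ?len..<Suc (k ! c)] @ blocks k cols rest"
  proof (cases "Suc ?len < Suc (k ! c)")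
    case True
    then show ?thesis using blocks_cong[of rest cols' cols k] rest_c' c'c
      by (simp add: stk'_def stk blocks_Cons)
  next
    case False
    then show ?thesis using blocks_cong[of rest cols' cols k] rest_c'
      by (simp add: stk'_def)
  qed
  have ms': "map snd (tl L) = map (\<lambda>(c,p). \<beta> c + p) ((c, ?len) # blocks k cols' stk')"
  proof -
    have "map snd (tl L) = tl (map snd L)" by (simp add: map_tl)
    also have "\<dots> = map (\<lambda>(c,p). \<beta> c + p) (blocks k cols stk)" using ms by simp
    finally show ?thesis using bl bl' by simp
  qed
  have pars': "\<forall>d. 1 \<le> d \<and> d < j \<longrightarrow> par d < d \<and> pp d < length (cols' ! (par d))
          \<and> cols' ! (par d) ! (pp d) = hd (cols' ! d) - 1 \<and> \<beta> d = \<beta> (par d) + pp d"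
  proof (intro allI impI)
    fix d assume d: "1 \<le> d \<and> d < j"
    have P: "par d < d \<and> pp d < length (cols ! (par d))
          \<and> cols ! (par d) ! (pp d) = hd (cols ! d) - 1 \<and> \<beta> d = \<beta> (par d) + pp d"
      using pars d by blast
    have "cols' ! (par d) ! (pp d) = cols ! (par d) ! (pp d)"
      using P c'c c'd by (cases "par d = c") (auto simp: nth_append)
    moreover have "hd (cols' ! d) = hd (cols ! d)"
      using c'c c'd cne by (cases "d = c") auto
    moreover have "length (cols ! (par d)) \<le> length (cols' ! (par d))"
      using c'c c'd by (cases "par d = c") auto
    ultimately show "par d < d \<and> pp d < length (cols' ! (par d))
          \<and> cols' ! (par d) ! (pp d) = hd (cols' ! d) - 1 \<and> \<beta> d = \<beta> (par d) + pp d"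
      using P by auto
  qed
  have "finv0 k (Suc n) cols' (tl L) j D stk' \<beta> par pp c ?len"
    unfolding finv0_def using lc' ne' srt' le' dj' act' ds' sst' pos' ms' pars' I by simp
  then show ?thesis unfolding finv_def fs by blast
qed

lemma finv_S:
  assumes inv: "finv0 k n cols L j D stk \<beta> par pp c0 p0"
    and jl: "j < length k" and kpos: "\<forall>c<length k. 0 < k ! c"
  shows "finv k (Suc n) (fill_step k cols (Suc n, S i)) (blk (k ! j) (hd L) @ tl L, Suc j, A', D + snd (hd L))"
proof -
  note I = inv[unfolded finv0_def]
  have lc: "length cols = length k" using I by simp
  have ne: "\<forall>c<length k. cols ! c \<noteq> [] \<longleftrightarrow> c < j" using I by simp
  have srt: "\<forall>c<length k. sorted_wrt (<) (cols ! c)" using I by simp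
  have le: "\<forall>c<length k. \<forall>x\<in>set (cols ! c). x \<le> n" using I by simp
  have dj: "\<forall>c<length k. \<forall>d<length k. c \<noteq> d \<longrightarrow> set (cols ! c) \<inter> set (cols ! d) = {}" using I by simp
  have act: "active_cols k cols = set stk" and ds: "distinct stk" using I by simp_all
  have sst: "sorted_wrt (\<lambda>c d. last (cols ! d) < last (cols ! c)) stk" using I by simp
  have ms: "map snd L = map (\<lambda>(c,p). \<beta> c + p) ((c0,p0) # blocks k cols stk)" using I by simp
  have pars: "\<forall>c. 1 \<le> c \<and> c < j \<longrightarrow> par c < c \<and> pp c < length (cols ! (par c))
          \<and> cols ! (par c) ! (pp c) = hd (cols ! c) - 1 \<and> \<beta> c = \<beta> (par c) + pp c" using I by simp
  have c0j: "c0 < j" and p0l: "p0 < length (cols ! c0)" and c0n: "cols ! c0 ! p0 = n" using I by simp_all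
  have b0: "\<beta> 0 = 0" and Deq: "D = (\<Sum>c<j. \<beta> c)" using I by simp_all
  have Lne: "L \<noteq> []" using ms by auto
  have hdL: "snd (hd L) = \<beta> c0 + p0"
  proof -
    have "snd (hd L) = hd (map snd L)" using Lne by (simp add: hd_map)
    then show ?thesis using ms by simp
  qed
  have cje: "cols ! j = []" using ne[rule_format, OF jl] by simp
  have least: "(LEAST c. c < length cols \<and> cols ! c = []) = j"
  proof (rule Least_equality)
    show "j < length cols \<and> cols ! j = []" using jl lc cje by simp
  next
    fix c assume "c < length cols \<and> cols ! c = []"
    then show "j \<le> c" using ne lc by (metis not_le)
  qed
  define cols' where "cols' = cols[j := [Suc n]]"
  have fs: "fill_step k cols (Suc n, S i) = cols'" by (simp add: fill_step_def least cols'_def)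
  have c'j: "cols' ! j = [Suc n]" using jl lc by (simp add: cols'_def)
  have c'd: "cols' ! d = cols ! d" if "d \<noteq> j" for d using that by (simp add: cols'_def)
  have lc': "length cols' = length k" using lc by (simp add: cols'_def)
  have jstk: "j \<notin> set stk" using act cje by (auto simp: active_cols_def)
  have stk_c': "cols' ! d = cols ! d" if "d \<in> set stk" for d
  proof -
    have "d \<noteq> j" using that jstk by auto
    then show ?thesis by (rule c'd)
  qed
  have nin: "Suc n \<notin> set (cols ! d)" if "d < length k" for d using le that by fastforce
  define stk' where "stk' = j # stk"
  define \<beta>' where "\<beta>' = \<beta>(j := \<beta> c0 + p0)"
  define par' where "par' = par(j := c0)"
  define pp' where "pp' = pp(j := p0)"
  have ne': "\<forall>d<length k. cols' ! d \<noteq> [] \<longleftrightarrow> d < Suc j"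
    using ne c'j c'd by (metis less_Suc_eq list.distinct(1))
  have srt': "\<forall>d<length k. sorted_wrt (<) (cols' ! d)"
    using srt c'j c'd by (metis sorted_wrt1)
  have le': "\<forall>d<length k. \<forall>x\<in>set (cols' ! d). x \<le> Suc n"
  proof (intro allI impI ballI)
    fix d x assume d: "d < length k" and x: "x \<in> set (cols' ! d)"
    show "x \<le> Suc n"
    proof (cases "d = j")
      case True then show ?thesis using x c'j by simp
    next
      case False then show ?thesis using x le d c'd by fastforce
    qed
  qed
  have dj': "\<forall>d<length k. \<forall>e<length k. d \<noteq> e \<longrightarrow> set (cols' ! d) \<inter> set (cols' ! e) = {}"
  proof (intro allI impI)
    fix d e assume d: "d < length k" and e: "e < length k" and de: "d \<noteq> e"
    show "set (cols' ! d) \<inter> set (cols' ! e) = {}"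
    proof (cases "d = j")
      case True
      then show ?thesis using d e de nin[OF e] c'j c'd by auto
    next
      case False
      show ?thesis
      proof (cases "e = j")
        case True
        then show ?thesis using d e de nin[OF d] c'j c'd by auto
      next
        case False
        then show ?thesis using dj d e de c'd \<open>d \<noteq> j\<close> by auto
      qed
    qed
  qed
  have act': "active_cols k cols' = set stk'"
  proof (rule set_eqI)
    fix d
    show "d \<in> active_cols k cols' \<longleftrightarrow> d \<in> set stk'"
    proof (cases "d = j")
      case True
      then show ?thesis using jl kpos c'j by (auto simp: active_cols_def stk'_def)
    next
      case False
      have "d \<in> active_cols k cols' \<longleftrightarrow> d \<in> active_cols k cols"
        using False c'd by (simp add: active_cols_def)
      then show ?thesis using False act by (auto simp: stk'_def)
    qed
  qed
  have ds': "distinct stk'" using ds jstk by (simp add: stk'_def)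
  have sst0: "sorted_wrt (\<lambda>a b. last (cols' ! b) < last (cols' ! a)) stk"
  proof (rule sorted_wrt_mono_rel[of _ "\<lambda>a b. last (cols ! b) < last (cols ! a)"])
    show "sorted_wrt (\<lambda>a b. last (cols ! b) < last (cols ! a)) stk" by (rule sst)
  qed (simp add: stk_c')
  have sst': "sorted_wrt (\<lambda>a b. last (cols' ! b) < last (cols' ! a)) stk'"
  proof -
    have "\<forall>d\<in>set stk. last (cols' ! d) < last (cols' ! j)"
    proof
      fix d assume d: "d \<in> set stk"
      then have "d \<in> active_cols k cols" using act by simp
      then have dl: "d < length k" and dne: "cols ! d \<noteq> []" by (auto simp: active_cols_def)
      have "last (cols ! d) \<le> n" using le dl dne by simp
      then show "last (cols' ! d) < last (cols' ! j)" using stk_c'[OF d] c'j by simp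
    qed
    then show ?thesis using sst0 by (simp add: stk'_def)
  qed
  have pos': "j < Suc j \<and> 0 < length (cols' ! j) \<and> cols' ! j ! 0 = Suc n"
    using c'j by simp
  have bl': "blocks k cols' stk' = map (Pair j) [1..<Suc (k ! j)] @ blocks k cols stk"
    using blocks_cong[of stk cols' cols k] stk_c' c'j by (simp add: stk'_def blocks_Cons)
  have bmap: "map (\<lambda>(c,p). \<beta>' c + p) (blocks k cols stk) = map (\<lambda>(c,p). \<beta> c + p) (blocks k cols stk)"
  proof (rule map_cong[OF refl])
    fix x assume "x \<in> set (blocks k cols stk)"
    then have "fst x \<in> set stk" by (rule blocks_fst)
    then have "fst x \<noteq> j" using jstk by auto
    then show "(\<lambda>(c,p). \<beta>' c + p) x = (\<lambda>(c,p). \<beta> c + p) x" by (cases x) (simp add: \<beta>'_def)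
  qed
  have ms': "map snd (blk (k ! j) (hd L) @ tl L) = map (\<lambda>(c,p). \<beta>' c + p) ((j, 0) # blocks k cols' stk')"
  proof -
    have t: "map snd (tl L) = map (\<lambda>(c,p). \<beta> c + p) (blocks k cols stk)"
      using ms by (simp add: map_tl)
    have "map snd (blk (k ! j) (hd L)) = map (\<lambda>p. snd (hd L) + p) [0..<Suc (k ! j)]"
      by (simp add: blk_def del: upt_Suc)
    also have "\<dots> = map (\<lambda>(c,p). \<beta>' c + p) ((j, 0) # map (Pair j) [1..<Suc (k ! j)])"
      by (simp add: hdL \<beta>'_def upt_conv_Cons del: upt_Suc)
    finally show ?thesis using t bl' bmap by simp
  qed
  have b0': "\<beta>' 0 = 0" using b0 c0j by (simp add: \<beta>'_def)
  have pars': "\<forall>d. 1 \<le> d \<and> d < Suc j \<longrightarrow> par' d < d \<and> pp' d < length (cols' ! (par' d))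
          \<and> cols' ! (par' d) ! (pp' d) = hd (cols' ! d) - 1 \<and> \<beta>' d = \<beta>' (par' d) + pp' d"
  proof (intro allI impI)
    fix d assume d: "1 \<le> d \<and> d < Suc j"
    show "par' d < d \<and> pp' d < length (cols' ! (par' d))
          \<and> cols' ! (par' d) ! (pp' d) = hd (cols' ! d) - 1 \<and> \<beta>' d = \<beta>' (par' d) + pp' d"
    proof (cases "d = j")
      case True
      have "c0 \<noteq> j" using c0j by simp
      then show ?thesis using True c0j p0l c0n c'j c'd[of c0]
        by (simp add: par'_def pp'_def \<beta>'_def)
    next
      case False
      then have dj: "1 \<le> d \<and> d < j" using d by simp
      have P: "par d < d \<and> pp d < length (cols ! (par d))
          \<and> cols ! (par d) ! (pp d) = hd (cols ! d) - 1 \<and> \<beta> d = \<beta> (par d) + pp d"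
        using pars dj by blast
      have pj: "par d \<noteq> j" using P dj by simp
      show ?thesis using P pj False c'd[of d] c'd[of "par d"]
        by (simp add: par'_def pp'_def \<beta>'_def)
    qed
  qed
  have D': "D + snd (hd L) = (\<Sum>c<Suc j. \<beta>' c)"
  proof -
    have "(\<Sum>c<j. \<beta>' c) = (\<Sum>c<j. \<beta> c)" by (rule sum.cong) (auto simp: \<beta>'_def)
    then show ?thesis using Deq hdL by (simp add: \<beta>'_def)
  qed
  have "finv0 k (Suc n) cols' (blk (k ! j) (hd L) @ tl L) (Suc j) (D + snd (hd L)) stk' \<beta>' par' pp' j 0"
    unfolding finv0_def using lc' jl ne' srt' le' dj' act' ds' sst' pos' ms' b0' pars' D' by simp
  then show ?thesis unfolding finv_def fs by blast
qed

lemma sorted_less_distinct: "sorted_wrt (<) (xs::nat list) \<Longrightarrow> distinct xs"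
  by (simp add: strict_sorted_iff)

lemma pos_of_distinct: "distinct xs \<Longrightarrow> p < length xs \<Longrightarrow> pos_of xs (xs ! p) = p"
  unfolding pos_of_def
  by (rule Least_equality) (auto simp: nth_eq_iff_index_eq)

lemma col_of_eq:
  assumes "c < length T" "x \<in> set (T ! c)"
    and "\<forall>c<length T. \<forall>d<length T. c \<noteq> d \<longrightarrow> set (T ! c) \<inter> set (T ! d) = {}"
  shows "col_of T x = c"
  unfolding col_of_def
proof (rule the_equality)
  show "c < length T \<and> x \<in> set (T ! c)" using assms by simp
next
  fix d assume "d < length T \<and> x \<in> set (T ! d)"
  then show "d = c" using assms by blast
qed

lemma bases_eq:
  assumes lT: "length T = l" and l1: "1 \<le> l"
    and srt: "\<forall>c<l. sorted_wrt (<) (T ! c)"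
    and dj: "\<forall>c<l. \<forall>d<l. c \<noteq> d \<longrightarrow> set (T ! c) \<inter> set (T ! d) = {}"
    and b0: "\<beta> 0 = (0::nat)"
    and pars: "\<forall>c. 1 \<le> c \<and> c < l \<longrightarrow> par c < c \<and> pp c < length (T ! (par c))
          \<and> T ! (par c) ! (pp c) = hd (T ! c) - 1 \<and> \<beta> c = \<beta> (par c) + pp c"
  shows "bases T = map \<beta> [0..<l]"
proof -
  let ?g = "\<lambda>bs c. bs @ [(let A = hd (T ! c) - 1; c' = col_of T A in bs ! c' + pos_of (T ! c') A)]"
  have "1 \<le> n \<and> n \<le> l \<longrightarrow> foldl ?g [0] [1..<n] = map \<beta> [0..<n]" for n
  proof (induction n)
    case 0 then show ?case by simp
  next
    case (Suc n)
    show ?case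
    proof (intro impI)
      assume n: "1 \<le> Suc n \<and> Suc n \<le> l"
      show "foldl ?g [0] [1..<Suc n] = map \<beta> [0..<Suc n]"
      proof (cases "n = 0")
        case True then show ?thesis using b0 by simp
      next
        case False
        then have IH: "foldl ?g [0] [1..<n] = map \<beta> [0..<n]" using Suc n by simp
        have P: "par n < n \<and> pp n < length (T ! (par n))
          \<and> T ! (par n) ! (pp n) = hd (T ! n) - 1 \<and> \<beta> n = \<beta> (par n) + pp n"
          using pars False n by simp
        have pl: "par n < length T" using P n lT by simp
        have "T ! (par n) ! (pp n) \<in> set (T ! (par n))" by (rule nth_mem) (use P in simp)
        then have Amem: "hd (T ! n) - 1 \<in> set (T ! (par n))" using P by simp
        have co: "col_of T (hd (T ! n) - 1) = par n"
          using col_of_eq[OF pl Amem] dj lT by simp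
        have po: "pos_of (T ! (par n)) (hd (T ! n) - 1) = pp n"
        proof -
          have d: "distinct (T ! (par n))" using sorted_less_distinct srt pl lT by simp
          have "pos_of (T ! (par n)) (T ! (par n) ! (pp n)) = pp n" by (rule pos_of_distinct[OF d]) (use P in simp)
          then show ?thesis using P by simp
        qed
        have "foldl ?g [0] [1..<Suc n] = ?g (map \<beta> [0..<n]) n"
          using False IH by simp
        also have "\<dots> = map \<beta> [0..<n] @ [\<beta> n]"
          using co po P by (simp add: Let_def)
        finally show ?thesis by simp
      qed
    qed
  qed
  then show ?thesis using l1 lT by (simp add: bases_def)
qed

lemma depth_run:
  assumes run: "run k st0 \<pi>" and kpos: "\<forall>c<length k. 0 < k ! c" and kne: "k \<noteq> []"
    and fin: "foldl (sstep k) st0 \<pi> = (L, j, A, D)"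
  shows "depth k \<pi> = D"
proof -
  let ?N = "length \<pi>"
  have ok: "\<forall>m<?N. okst k (stn k \<pi> m) (\<pi> ! m)" and fst: "finst k (foldl (sstep k) st0 \<pi>)"
    using run by (simp_all add: run_iff stn_def)
  have jl: "j = length k" and L1: "length L = 1" using fst fin by simp_all
  have N1: "1 \<le> ?N"
  proof (rule ccontr)
    assume "\<not> 1 \<le> ?N"
    then have "\<pi> = []" by (cases \<pi>) auto
    then show False using run kne by (simp add: st0_def)
  qed
  have p0: "\<pi> ! 0 = S 0"
  proof -
    have "\<pi> \<noteq> []" using N1 by (cases \<pi>) auto
    then have o: "okst k st0 (\<pi> ! 0)" using ok[rule_format, of 0] by (simp add: stn_def)
    show ?thesis
    proof (cases "\<pi> ! 0")
      case (S i) then show ?thesis using o by (simp add: st0_def)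
    next
      case W then show ?thesis using o by (simp add: st0_def)
    qed
  qed
  define zs where "zs = zip [2..<?N + 1] (tl \<pi>)"
  define ic where "ic = [1::nat] # replicate (length k - 1) []"
  define fs where "fs n = foldl (fill_step k) ic (take (n - 1) zs)" for n
  have lzs: "length zs = ?N - 1" by (simp add: zs_def) arith
  have fs_Suc: "fs (Suc n) = fill_step k (fs n) (Suc n, \<pi> ! n)" if "1 \<le> n" "n < ?N" for n
  proof -
    have "n = Suc (n - 1)" using that by simp
    then have "take n zs = take (Suc (n - 1)) zs" by simp
    also have "\<dots> = take (n - 1) zs @ [zs ! (n - 1)]"
      by (rule take_Suc_conv_app_nth) (use that lzs in simp)
    finally have "take n zs = take (n - 1) zs @ [zs ! (n - 1)]" .
    moreover have "zs ! (n - 1) = (Suc n, \<pi> ! n)"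
    proof -
      have "[2..<?N + 1] ! (n - 1) = 2 + (n - 1)" by (rule nth_upt) (use that in simp)
      then show ?thesis using that by (simp add: zs_def nth_tl del: upt_Suc)
    qed
    ultimately show ?thesis by (simp add: fs_def)
  qed
  have fill: "fill k \<pi> = fs ?N" using lzs by (simp add: fill_def fs_def zs_def ic_def)
  have ic_nth: "ic ! c = (if c = 0 then [1] else [])" if "c < length k" for c
    using that by (cases c) (auto simp: ic_def)
  have lic: "length ic = length k" using kne by (simp add: ic_def)
  have st1: "stn k \<pi> 1 = (blk (k ! 0) (0,0), 1, 0, 0)"
  proof -
    have "\<pi> \<noteq> []" using N1 by (cases \<pi>) auto
    then show ?thesis using stn_Suc[of 0 \<pi> k] p0 by (simp add: stn_def st0_def)
  qed
  have k0: "0 < length k" using kne by simp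
  have act1: "active_cols k ic = set [0]"
    using kpos k0 by (auto simp: active_cols_def ic_nth split: if_splits)
  have bl1: "blocks k ic [0] = map (Pair 0) [1..<Suc (k ! 0)]"
    using k0 by (simp add: blocks_def ic_nth)
  have ms1: "map snd (blk (k ! 0) (0,0)) = map (\<lambda>(c,p). (\<lambda>_. 0::nat) c + p) ((0,0) # blocks k ic [0])"
    by (simp add: bl1 blk_def upt_conv_Cons del: upt_Suc)
  have inv1: "finv k 1 (fs 1) (stn k \<pi> 1)"
  proof -
    have "finv0 k 1 ic (blk (k ! 0) (0,0)) 1 0 [0] (\<lambda>_. 0) (\<lambda>_. 0) (\<lambda>_. 0) 0 0"
    proof -
      have a1: "\<forall>c<length k. ic ! c \<noteq> [] \<longleftrightarrow> c < 1" by (simp add: ic_nth)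
      have a2: "\<forall>c<length k. sorted_wrt (<) (ic ! c)" by (simp add: ic_nth)
      have a3: "\<forall>c<length k. \<forall>x\<in>set (ic ! c). x \<le> 1" by (simp add: ic_nth)
      have a4: "\<forall>c<length k. \<forall>d<length k. c \<noteq> d \<longrightarrow> set (ic ! c) \<inter> set (ic ! d) = {}"
        by (auto simp: ic_nth)
      have a5: "ic ! 0 = [1]" using k0 by (simp add: ic_nth)
      show ?thesis unfolding finv0_def
        using lic k0 act1 ms1 a1 a2 a3 a4 a5 by (simp add: Suc_le_eq case_prod_unfold) presburger
    qed
    then show ?thesis unfolding finv_def st1 by (simp add: fs_def) blast
  qed
  have "1 \<le> n \<and> n \<le> ?N \<longrightarrow> finv k n (fs n) (stn k \<pi> n)" for n
  proof (induction n)
    case 0 then show ?case by simp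
  next
    case (Suc n)
    show ?case
    proof (intro impI)
      assume n: "1 \<le> Suc n \<and> Suc n \<le> ?N"
      show "finv k (Suc n) (fs (Suc n)) (stn k \<pi> (Suc n))"
      proof (cases "n = 0")
        case True then show ?thesis using inv1 by simp
      next
        case False
        then have IH: "finv k n (fs n) (stn k \<pi> n)" using Suc n by simp
        have nl: "n < ?N" using n by simp
        have okn: "okst k (stn k \<pi> n) (\<pi> ! n)" using ok nl by simp
        obtain L' j' A' D' where stq: "stn k \<pi> n = (L', j', A', D')" by (cases "stn k \<pi> n") auto
        obtain stk \<beta> par pp c0 p0 where I: "finv0 k n (fs n) L' j' D' stk \<beta> par pp c0 p0"
          using IH stq by (auto simp: finv_def)
        have e1: "fs (Suc n) = fill_step k (fs n) (Suc n, \<pi> ! n)" using fs_Suc False nl by simp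
        have e2: "stn k \<pi> (Suc n) = sstep k (stn k \<pi> n) (\<pi> ! n)" using stn_Suc nl by simp
        show ?thesis
        proof (cases "\<pi> ! n")
          case (S i)
          then have "j' < length k" using okn stq by simp
          then show ?thesis using finv_S[OF I _ kpos] e1 e2 stq S by simp
        next
          case W
          then have "2 \<le> length L'" using okn stq by simp
          then show ?thesis using finv_W[OF I] e1 e2 stq W by simp
        qed
      qed
    qed
  qed
  then have "finv k ?N (fs ?N) (stn k \<pi> ?N)" using N1 by simp
  then obtain stk \<beta> par pp c0 p0 where I: "finv0 k ?N (fill k \<pi>) L j D stk \<beta> par pp c0 p0"
    using fin fill by (auto simp: finv_def stn_def)
  note II = I[unfolded finv0_def]
  have "bases (fill k \<pi>) = map \<beta> [0..<length k]"
  proof (rule bases_eq[where par=par and pp=pp])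
    show "length (fill k \<pi>) = length k" using II by simp
    show "1 \<le> length k" using k0 by (simp add: Suc_le_eq)
  qed (use II jl in simp_all)
  then have "depth k \<pi> = sum_list (map \<beta> [0..<length k])" by (simp add: depth_def)
  also have "\<dots> = (\<Sum>c<length k. \<beta> c)"
    by (simp add: interv_sum_list_conv_sum_set_nat atLeast0LessThan)
  also have "\<dots> = D" using II jl by simp
  finally show ?thesis .
qed



definition wt :: "'a::comm_semiring_1 \<Rightarrow> 'a \<Rightarrow> sst \<Rightarrow> 'a" where
  "wt q t st = (case st of (L, j, A, D) \<Rightarrow> q ^ A * t ^ D)"

lemma FF_cons_eq:
  "FF b q t (x # L') n = (if L' = [] \<and> n = 0 then 1 else 0) + (if L' \<noteq> [] then FF b q t L' n else 0)
     + (if n = 0 then 0 else q ^ fst x * t ^ snd x * FF b q t (blk b x @ L') (n - 1))"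
  by (cases L') auto

lemma run_set_split:
  "{v. run k (L, j, A, D) v} =
     (if finst k (L, j, A, D) then {[]} else {})
     \<union> (if j < length k then Cons (S j) ` {v. run k (sstep k (L, j, A, D) (S j)) v} else {})
     \<union> (if 2 \<le> length L then Cons W ` {v. run k (tl L, j, A, D) v} else {})"
proof (rule set_eqI)
  fix v
  show "v \<in> {v. run k (L, j, A, D) v} \<longleftrightarrow> v \<in> (if finst k (L, j, A, D) then {[]} else {})
     \<union> (if j < length k then Cons (S j) ` {v. run k (sstep k (L, j, A, D) (S j)) v} else {})
     \<union> (if 2 \<le> length L then Cons W ` {v. run k (tl L, j, A, D) v} else {})"
  proof (cases v)
    case Nil then show ?thesis by (auto simp del: finst.simps)
  next
    case (Cons x w)
    then show ?thesis by (cases x) auto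
  qed
qed

lemma sum_run:
  assumes kb: "\<forall>i. 1 \<le> i \<and> i < length k \<longrightarrow> k ! i = b"
  shows "1 \<le> j \<and> j \<le> length k \<and> L \<noteq> [] \<longrightarrow>
    finite {v. run k (L, j, A, D) v} \<and>
    (\<Sum>v\<in>{v. run k (L, j, A, D) v}. wt q t (foldl (sstep k) (L, j, A, D) v))
      = q ^ A * t ^ D * FF b q t L (length k - j)"
proof (induction "(length k - j) * Suc b + length L" arbitrary: L j A D rule: less_induct)
  case less
  show ?case
  proof (intro impI)
    assume H: "1 \<le> j \<and> j \<le> length k \<and> L \<noteq> []"
    obtain x L' where L: "L = x # L'" using H by (cases L) auto
    let ?f = "\<lambda>v. wt q t (foldl (sstep k) (L, j, A, D) v)"
    define X1 where "X1 = (if finst k (L, j, A, D) then {[]} else ({} :: letter list set))"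
    define XS where "XS = {v. run k (sstep k (L, j, A, D) (S j)) v}"
    define XW where "XW = {v. run k (tl L, j, A, D) v}"
    define X2 where "X2 = (if j < length k then Cons (S j) ` XS else {})"
    define X3 where "X3 = (if 2 \<le> length L then Cons W ` XW else {})"
    have Xeq: "{v. run k (L, j, A, D) v} = X1 \<union> X2 \<union> X3"
      unfolding X1_def X2_def X3_def XS_def XW_def by (rule run_set_split)
    have kj: "j < length k \<Longrightarrow> k ! j = b" using kb H by simp
    have S_res: "j < length k \<Longrightarrow> finite XS \<and> (\<Sum>v\<in>XS. wt q t (foldl (sstep k) (sstep k (L, j, A, D) (S j)) v))
        = q ^ (A + fst x) * t ^ (D + snd x) * FF b q t (blk b x @ L') (length k - Suc j)"
    proof -
      assume jl: "j < length k"
      have st: "sstep k (L, j, A, D) (S j) = (blk b x @ L', Suc j, A + fst x, D + snd x)"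
        using kj[OF jl] L by simp
      have "(length k - Suc j) * Suc b + length (blk b x @ L') < (length k - j) * Suc b + length L"
      proof -
        have "length k - j = Suc (length k - Suc j)" using jl by simp
        then show ?thesis using L by simp
      qed
      then have "1 \<le> Suc j \<and> Suc j \<le> length k \<and> blk b x @ L' \<noteq> [] \<longrightarrow>
          finite {v. run k (blk b x @ L', Suc j, A + fst x, D + snd x) v} \<and>
          (\<Sum>v\<in>{v. run k (blk b x @ L', Suc j, A + fst x, D + snd x) v}.
              wt q t (foldl (sstep k) (blk b x @ L', Suc j, A + fst x, D + snd x) v))
          = q ^ (A + fst x) * t ^ (D + snd x) * FF b q t (blk b x @ L') (length k - Suc j)"
        by (rule less)
      then show ?thesis using jl unfolding XS_def st by simp
    qed
    have W_res: "2 \<le> length L \<Longrightarrow> finite XW \<and> (\<Sum>v\<in>XW. wt q t (foldl (sstep k) (tl L, j, A, D) v))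
        = q ^ A * t ^ D * FF b q t L' (length k - j)"
    proof -
      assume l2: "2 \<le> length L"
      have "(length k - j) * Suc b + length L' < (length k - j) * Suc b + length L" using L by simp
      then have "1 \<le> j \<and> j \<le> length k \<and> L' \<noteq> [] \<longrightarrow>
          finite {v. run k (L', j, A, D) v} \<and>
          (\<Sum>v\<in>{v. run k (L', j, A, D) v}. wt q t (foldl (sstep k) (L', j, A, D) v))
          = q ^ A * t ^ D * FF b q t L' (length k - j)"
        by (rule less)
      moreover have "L' \<noteq> []" using l2 L by auto
      ultimately show ?thesis using H L by (simp add: XW_def)
    qed
    have fin1: "finite X1" by (simp add: X1_def)
    have fin2: "finite X2" using S_res by (simp add: X2_def)
    have fin3: "finite X3" using W_res by (simp add: X3_def)
    have d12: "X1 \<inter> X2 = {}" by (auto simp: X1_def X2_def)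
    have d3: "(X1 \<union> X2) \<inter> X3 = {}" by (auto simp: X1_def X2_def X3_def)
    have s1: "sum ?f X1 = (if length L' = 0 \<and> length k - j = 0 then q ^ A * t ^ D else 0)"
      using H L by (auto simp: X1_def wt_def)
    have s2: "sum ?f X2 = (if length k - j = 0 then 0 else
                q ^ A * t ^ D * (q ^ fst x * t ^ snd x * FF b q t (blk b x @ L') (length k - j - 1)))"
    proof (cases "j < length k")
      case True
      have "sum ?f X2 = sum (?f \<circ> Cons (S j)) XS" unfolding X2_def using True
        by (simp add: sum.reindex)
      also have "\<dots> = (\<Sum>v\<in>XS. wt q t (foldl (sstep k) (sstep k (L, j, A, D) (S j)) v))"
        by (simp add: comp_def)
      also have "\<dots> = q ^ (A + fst x) * t ^ (D + snd x) * FF b q t (blk b x @ L') (length k - Suc j)"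
        using S_res True by simp
      finally show ?thesis using True by (simp add: power_add ac_simps)
    next
      case False then show ?thesis using H by (simp add: X2_def)
    qed
    have s3: "sum ?f X3 = (if L' \<noteq> [] then q ^ A * t ^ D * FF b q t L' (length k - j) else 0)"
    proof (cases "2 \<le> length L")
      case True
      have "sum ?f X3 = sum (?f \<circ> Cons W) XW" unfolding X3_def using True
        by (simp add: sum.reindex)
      also have "\<dots> = (\<Sum>v\<in>XW. wt q t (foldl (sstep k) (tl L, j, A, D) v))"
        by (simp add: comp_def L)
      also have "\<dots> = q ^ A * t ^ D * FF b q t L' (length k - j)"
        using W_res True by simp
      finally show ?thesis using True L by auto
    next
      case False
      then have "L' = []" using L by (cases L') auto
      then show ?thesis using False by (simp add: X3_def)
    qed
    have "sum ?f (X1 \<union> X2 \<union> X3) = sum ?f X1 + sum ?f X2 + sum ?f X3"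
      using fin1 fin2 fin3 d12 d3 by (simp add: sum.union_disjoint)
    also have "\<dots> = q ^ A * t ^ D * FF b q t (x # L') (length k - j)"
      unfolding s1 s2 s3 FF_cons_eq by (simp add: distrib_left add.commute)
    also have "\<dots> = q ^ A * t ^ D * FF b q t L (length k - j)" using L by simp
    finally show "finite {v. run k (L, j, A, D) v} \<and>
      (\<Sum>v\<in>{v. run k (L, j, A, D) v}. wt q t (foldl (sstep k) (L, j, A, D) v))
      = q ^ A * t ^ D * FF b q t L (length k - j)"
      using Xeq fin1 fin2 fin3 by simp
  qed
qed

lemma Ctil_formula:
  fixes q t :: "'a::comm_semiring_1"
  assumes a: "0 < a" and b: "0 < b" and m: "2 \<le> m"
  shows "Ctil (a # replicate (m - 1) b) q t = FF b q t (blk a (0,0)) (m - 1)"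
proof -
  define k where "k = a # replicate (m - 1) b"
  have lk: "length k = m" using m by (simp add: k_def)
  have k0: "k ! 0 = a" by (simp add: k_def)
  have kb: "\<forall>i. 1 \<le> i \<and> i < length k \<longrightarrow> k ! i = b"
  proof (intro allI impI)
    fix i assume i: "1 \<le> i \<and> i < length k"
    then obtain i' where "i = Suc i'" by (cases i) auto
    then show "k ! i = b" using i by (simp add: k_def)
  qed
  have kpos: "\<forall>c<length k. 0 < k ! c"
  proof (intro allI impI)
    fix c assume c: "c < length k"
    show "0 < k ! c"
    proof (cases "c = 0")
      case True then show ?thesis using a k0 by simp
    next
      case False then show ?thesis using kb c b by simp
    qed
  qed
  have kne: "k \<noteq> []" by (simp add: k_def)
  define st1 :: sst where "st1 = (blk a (0,0), 1, 0, 0)"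
  have Dy: "Dyck k = {\<pi>. run k st0 \<pi>}"
  proof (rule set_eqI)
    fix \<pi>
    show "\<pi> \<in> Dyck k \<longleftrightarrow> \<pi> \<in> {\<pi>. run k st0 \<pi>}"
    proof
      assume "\<pi> \<in> Dyck k" then show "\<pi> \<in> {\<pi>. run k st0 \<pi>}" by (simp add: Dyck_def kdyck_run)
    next
      assume r: "\<pi> \<in> {\<pi>. run k st0 \<pi>}"
      obtain L j A D where "foldl (sstep k) st0 \<pi> = (L, j, A, D)" by (cases "foldl (sstep k) st0 \<pi>") auto
      then show "\<pi> \<in> Dyck k" using r run_kdyck_area by (simp add: Dyck_def)
    qed
  qed
  have st01: "sstep k st0 (S i) = st1" for i by (simp add: st0_def st1_def k0)
  have R: "{\<pi>. run k st0 \<pi>} = Cons (S 0) ` {v. run k st1 v}"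
  proof (rule set_eqI)
    fix \<pi>
    show "\<pi> \<in> {\<pi>. run k st0 \<pi>} \<longleftrightarrow> \<pi> \<in> Cons (S 0) ` {v. run k st1 v}"
    proof (cases \<pi>)
      case Nil then show ?thesis using lk m by (auto simp: st0_def)
    next
      case (Cons x w)
      then show ?thesis using lk m st01 by (cases x) (auto simp: st0_def)
    qed
  qed
  have wtf: "q ^ area k (S 0 # v) * t ^ depth k (S 0 # v) = wt q t (foldl (sstep k) st1 v)"
    if v: "v \<in> {v. run k st1 v}" for v
  proof -
    have r: "run k st0 (S 0 # v)" using R v by blast
    have fe: "foldl (sstep k) st0 (S 0 # v) = foldl (sstep k) st1 v" using st01 by simp
    obtain L j A D where e: "foldl (sstep k) st1 v = (L, j, A, D)" by (cases "foldl (sstep k) st1 v") auto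
    have "area k (S 0 # v) = A" using run_kdyck_area[OF r] fe e by simp
    moreover have "depth k (S 0 # v) = D" using depth_run[OF r kpos kne] fe e by simp
    ultimately show ?thesis using e by (simp add: wt_def)
  qed
  have SR: "finite {v. run k st1 v} \<and>
    (\<Sum>v\<in>{v. run k st1 v}. wt q t (foldl (sstep k) st1 v)) = q ^ 0 * t ^ 0 * FF b q t (blk a (0,0)) (length k - 1)"
    using sum_run[OF kb, of 1 "blk a (0,0)" 0 0 q t] lk m by (simp add: st1_def)
  have "Ctil k q t = (\<Sum>\<pi>\<in>Cons (S 0) ` {v. run k st1 v}. q ^ area k \<pi> * t ^ depth k \<pi>)"
    by (simp add: Ctil_def Dy R)
  also have "\<dots> = (\<Sum>v\<in>{v. run k st1 v}. q ^ area k (S 0 # v) * t ^ depth k (S 0 # v))"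
    by (simp add: sum.reindex)
  also have "\<dots> = (\<Sum>v\<in>{v. run k st1 v}. wt q t (foldl (sstep k) st1 v))"
    by (rule sum.cong) (simp_all add: wtf)
  also have "\<dots> = FF b q t (blk a (0,0)) (m - 1)" using SR lk by simp
  finally show ?thesis by (simp add: k_def)
qed

theorem corollary5p2:
  shows "(\<forall>(a::nat) (b::nat) (m::nat) (q::'a::comm_semiring_1) t.
            0 < a \<longrightarrow> 0 < b \<longrightarrow> 2 \<le> m \<longrightarrow>
            Ctil (a # replicate (m - 1) b) q t = Ctil (a # replicate (m - 1) b) t q)
       \<and> (\<forall>(k::nat list) (q::'a) t.
            length k = 2 \<longrightarrow> (\<forall>x\<in>set k. 0 < x) \<longrightarrow> Ctil k q t = Ctil k t q)"
proof -
  have P1: "Ctil (a # replicate (m - 1) b) q t = Ctil (a # replicate (m - 1) b) t q"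
    if "0 < a" "0 < b" "2 \<le> m" for a b m and q t :: 'a
    using Ctil_formula[OF that, of q t] Ctil_formula[OF that, of t q] FF_blk_sym[of b q t a "m - 1"]
    by simp
  have P2: "Ctil k q t = Ctil k t q" if len: "length k = 2" and pos: "\<forall>x\<in>set k. 0 < x" for k and q t :: 'a
  proof -
    obtain a b where k: "k = [a, b]" using len
      by (auto simp: length_Suc_conv numeral_2_eq_2)
    have "k = a # replicate (2 - 1) b" using k by (simp add: numeral_2_eq_2)
    moreover have "0 < a" "0 < b" using pos k by auto
    ultimately show ?thesis using P1[of a b 2 q t] by simp
  qed
  show ?thesis using P1 P2 by blast
qed

end
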